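(* Let $F=(f,g)\colon \overline{\Delta}\to\overline{\Delta}^2$ be continuous, holomorphic on $\Delta$, with $F(b\Delta)\subset b(\Delta^2)$, and assume $f$ and $g$ are both nonconstant. Then for every $\xi\in b\Delta$ there is no injective sequence $(\zeta_n)$ in $b\Delta$ such that $f(\zeta_n)=\xi$ for all $n$ and such that the sequence $(g(\zeta_n))$ has a cluster point in $\Delta$. The same holds with the roles of $f$ and $g$ interchanged. Consequently, for every open face $\Phi$ of $\Delta^2$, the set $F(b\Delta)\cap\Phi$ has no cluster point in $\Phi$.
   Context: $\Delta=\{z\in\mathbb{C}: |z|<1\}$ is the open unit disc, $\overline{\Delta}$ its closure, $b\Delta$ the unit circle, $\Delta^2=\Delta\times\Delta$ and $b(\Delta^2)$ its topological boundary. An open face of $\Delta^2$ is a set of the form $\{\zeta\}\times\Delta$ or $\Delta\times\{\zeta\}$ with $\zeta\in b\Delta$. *)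

theory Defs
  imports "HOL-Analysis.Analysis"
begin

abbreviation udisc :: "complex set" where "udisc \<equiv> ball 0 1"
abbreviation cudisc :: "complex set" where "cudisc \<equiv> cball 0 1"
abbreviation ucircle :: "complex set" where "ucircle \<equiv> sphere 0 1"
abbreviation bidisc :: "(complex \<times> complex) set" where "bidisc \<equiv> udisc \<times> udisc"

definition open_face :: "(complex \<times> complex) set \<Rightarrow> bool" where
  "open_face P \<longleftrightarrow> (\<exists>z\<in>ucircle. P = {z} \<times> udisc \<or> P = udisc \<times> {z})"

definition seq_cluster_point :: "(nat \<Rightarrow> 'a::topological_space) \<Rightarrow> 'a \<Rightarrow> bool" where
  "seq_cluster_point x w \<longleftrightarrow> (\<exists>r. strict_mono r \<and> (x \<circ> r) \<longlonglongrightarrow> w)"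

end

theory Submission imports Defs "HOL-Complex_Analysis.Complex_Analysis" begin

definition qq :: "complex \<Rightarrow> complex" where "qq w = \<i>*(1-w)/(1+w)"
definition cc :: "complex \<Rightarrow> complex" where "cc s = (\<i> - s)/(\<i> + s)"

lemma qq_real: assumes "norm w = 1" "w \<noteq> -1" shows "qq w \<in> \<real>"
proof -
  have w0: "w \<noteq> 0" using assms by auto
  have "w * cnj w = 1" using assms(1) by (metis complex_norm_square mult.commute of_real_1 one_power2)
  hence cw: "cnj w = 1/w" using w0 by (simp add: field_simps)
  have "1 + w \<noteq> 0" using assms(2) by (metis add.commute add_eq_0_iff)
  have e1: "1 - 1/w = (w - 1)/w" "1 + 1/w = (1 + w)/w" using w0 by (simp_all add: field_simps)
  have "cnj (qq w) = - \<i> * (1 - 1/w) / (1 + 1/w)" unfolding qq_def by (simp add: cw)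
  also have "\<dots> = - \<i> * ((w - 1)/w) / ((1+w)/w)" by (simp only: e1)
  also have "\<dots> = - \<i> * (w - 1) / (1+w)" using w0 by simp
  also have "\<dots> = qq w" unfolding qq_def by (simp add: algebra_simps)
  finally have "cnj (qq w) = qq w" .
  thus ?thesis by (simp add: Reals_cnj_iff)
qed

lemma cc_qq: assumes "u \<noteq> -1" shows "cc (qq u) = u"
proof -
  have "1 + u \<noteq> 0" using assms by (metis add.commute add_eq_0_iff)
  hence e1: "\<i> - qq u = 2 * \<i> * u / (1 + u)"
    unfolding qq_def by (simp add: divide_simps) (simp add: algebra_simps)
  have e2: "\<i> + qq u = 2 * \<i> / (1 + u)"
    using \<open>1 + u \<noteq> 0\<close> unfolding qq_def by (simp add: divide_simps) (simp add: algebra_simps)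
  show ?thesis unfolding cc_def e1 e2 using \<open>1 + u \<noteq> 0\<close> by simp
qed

lemma qq_cc: assumes "\<i> + s \<noteq> 0" shows "qq (cc s) = s"
proof -
  have "(\<i> + s) + (\<i> - s) \<noteq> 0" by simp
  have e1: "1 - cc s = 2 * s / (\<i> + s)"
    unfolding cc_def using assms by (simp add: divide_simps)
  have e2: "1 + cc s = 2 * \<i> / (\<i> + s)"
    unfolding cc_def using assms by (simp add: divide_simps)
  show ?thesis unfolding qq_def e1 e2 using assms by simp
qed

lemma qq_eq0: assumes "u \<noteq> -1" shows "qq u = 0 \<longleftrightarrow> u = 1"
  using assms unfolding qq_def by (auto simp: add_eq_0_iff)

lemma im_nonneg_ne: "0 \<le> Im s \<Longrightarrow> \<i> + s \<noteq> 0"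
  proof
  assume "0 \<le> Im s" "\<i> + s = 0"
  hence "Im (\<i> + s) = 0" by simp
  thus False using \<open>0 \<le> Im s\<close> by simp
qed

lemma norm_cc: assumes "0 \<le> Im s" shows "norm (cc s) \<le> 1" and "0 < Im s \<Longrightarrow> norm (cc s) < 1"
  and "Im s = 0 \<Longrightarrow> norm (cc s) = 1"
proof -
  have nz: "\<i> + s \<noteq> 0" using im_nonneg_ne assms .
  have a: "norm (\<i> - s) = sqrt ((Re s)^2 + (1 - Im s)^2)" by (simp add: cmod_def power2_eq_square)
  have b: "norm (\<i> + s) = sqrt ((Re s)^2 + (1 + Im s)^2)" by (simp add: cmod_def power2_eq_square)
  have p: "norm (\<i> + s) > 0" using nz by simp
  have "norm (\<i> - s) \<le> norm (\<i> + s)" unfolding a b using assms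
    by (intro real_sqrt_le_mono) (simp add: power2_eq_square algebra_simps)
  thus "norm (cc s) \<le> 1" using p by (simp add: cc_def norm_divide divide_le_eq)
  show "norm (cc s) < 1" if "0 < Im s"
  proof -
    have "norm (\<i> - s) < norm (\<i> + s)" unfolding a b using that
      by (intro real_sqrt_less_mono) (simp add: power2_eq_square algebra_simps)
    thus ?thesis using p by (simp add: cc_def norm_divide divide_less_eq)
  qed
  show "norm (cc s) = 1" if "Im s = 0"
  proof -
    have "norm (\<i> - s) = norm (\<i> + s)" unfolding a b using that by simp
    thus ?thesis using p by (simp add: cc_def norm_divide)
  qed
qed

lemma unit_cnj: "norm (z::complex) = 1 \<Longrightarrow> cnj z * z = 1"
  by (metis complex_norm_square mult.commute of_real_1 one_power2)

lemma unit_cancel: "cnj (z::complex) * z = 1 \<Longrightarrow> z * (cnj z * w) = w"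
  by (metis mult.assoc mult.commute mult_1)

lemma unit_cancel2: "cnj (z::complex) * z = 1 \<Longrightarrow> cnj z * (z * w) = w"
  by (metis mult.assoc mult_1)

lemma core:
  fixes f :: "complex \<Rightarrow> complex"
  assumes contf: "continuous_on cudisc f" and holf: "f holomorphic_on udisc"
    and z0: "\<zeta>0 \<in> ucircle" and dpos: "\<delta> > 0"
    and mod1: "\<And>z. z \<in> ucircle \<Longrightarrow> dist z \<zeta>0 < \<delta> \<Longrightarrow> norm (f z) = 1"
    and fz0: "f \<zeta>0 = \<xi>"
    and lim: "\<zeta>0 islimpt {z\<in>ucircle. f z = \<xi>}"
  shows "\<forall>z\<in>cudisc. f z = \<xi>"
proof -
  have nxi: "norm \<xi> = 1" using mod1[OF z0] dpos fz0 by simp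
  have cxi: "cnj \<xi> * \<xi> = 1" using nxi by (rule unit_cnj)
  have nz0: "norm \<zeta>0 = 1" using z0 by simp
  have cz0: "cnj \<zeta>0 * \<zeta>0 = 1" using nz0 by (rule unit_cnj)
  define h where "h w = cnj \<xi> * f w" for w
  have conth: "continuous_on cudisc h" unfolding h_def by (intro continuous_intros contf)
  have hz0: "h \<zeta>0 = 1" using cxi fz0 by (simp add: h_def)
  have z0c: "\<zeta>0 \<in> cudisc" using z0 by simp
  obtain \<epsilon> where epos: "\<epsilon>>0" and eps: "\<And>w. w \<in> cudisc \<Longrightarrow> dist w \<zeta>0 < \<epsilon> \<Longrightarrow> dist (h w) 1 < 1/2"
    using conth[unfolded continuous_on_iff, rule_format, OF z0c, of "1/2"] hz0 by auto
  have hne: "h w \<noteq> -1" if "w \<in> cudisc" "dist w \<zeta>0 < \<epsilon>" for w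
  proof
    assume "h w = -1"
    with eps[OF that] show False by (simp add: dist_norm)
  qed
  define \<epsilon>1 where "\<epsilon>1 = min \<epsilon> \<delta>"
  have e1pos: "\<epsilon>1 > 0" using epos dpos by (simp add: \<epsilon>1_def)
  define c where "c s = \<zeta>0 * cc s" for s
  have ne1: "\<i> + s \<noteq> 0" if "s \<in> ball 0 1" for s :: complex
  proof
    assume "\<i> + s = 0"
    hence "s = - \<i>" by (simp add: add_eq_0_iff)
    with that show False by simp
  qed
  have contc: "continuous_on (ball 0 1) c" unfolding c_def cc_def
    by (intro continuous_intros) (use ne1 in auto)
  have c0: "c 0 = \<zeta>0" by (simp add: c_def cc_def)
  obtain r0 where r0pos: "r0 > 0" and r0: "\<And>s. s\<in>ball 0 1 \<Longrightarrow> dist s 0 < r0 \<Longrightarrow> dist (c s) \<zeta>0 < \<epsilon>1"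
    using contc[unfolded continuous_on_iff, rule_format, of 0 \<epsilon>1] e1pos c0 by auto
  define r where "r = min r0 (1/2)"
  have rpos: "r > 0" using r0pos by (simp add: r_def)
  define S where "S = ball (0::complex) r"
  have S1: "S \<subseteq> ball 0 1" unfolding S_def r_def by auto
  have cS: "dist (c s) \<zeta>0 < \<epsilon>1" if "s \<in> S" for s
    using r0[of s] that S1 by (auto simp: S_def r_def dist_commute)
  have cU: "c s \<in> cudisc" "dist (c s) \<zeta>0 < \<epsilon>" if "s \<in> S" "0 \<le> Im s" for s
  proof -
    show "c s \<in> cudisc" using norm_cc(1)[OF that(2)] nz0 by (simp add: c_def norm_mult)
    show "dist (c s) \<zeta>0 < \<epsilon>" using cS[OF that(1)] by (simp add: \<epsilon>1_def)
  qed
  have cUo: "c s \<in> udisc" if "0 < Im s" for s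
    using norm_cc(2)[of s] that nz0 by (simp add: c_def norm_mult)
  define K0 where "K0 s = qq (h (c s))" for s
  define T where "T = S \<inter> {z. 0 < Im z}"
  have holc: "c holomorphic_on T" unfolding c_def cc_def T_def
    by (intro holomorphic_intros) (auto dest: im_nonneg_ne[OF less_imp_le])
  have hfc: "(\<lambda>s. f (c s)) holomorphic_on T"
  proof -
    have "c ` T \<subseteq> udisc" using cUo by (auto simp: T_def)
    thus ?thesis using holomorphic_on_compose_gen[OF holc holf] by (simp add: o_def)
  qed
  have hne2: "1 + cnj \<xi> * f (c s) \<noteq> 0" if "s \<in> S" "0 \<le> Im s" for s
  proof
    assume "1 + cnj \<xi> * f (c s) = 0"
    hence "h (c s) = -1" unfolding h_def by (simp add: add_eq_0_iff)
    with hne[OF cU[OF that]] show False by simp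
  qed
  have hol1: "K0 holomorphic_on T" unfolding K0_def qq_def h_def
    by (intro holomorphic_intros hfc) (use hne2 in \<open>auto simp: T_def\<close>)
  define T' where "T' = S \<inter> {z. 0 \<le> Im z}"
  have contc': "continuous_on T' c" using contc S1 by (auto simp: T'_def intro: continuous_on_subset)
  have cfc: "continuous_on T' (\<lambda>s. f (c s))"
  proof -
    have "c ` T' \<subseteq> cudisc" using cU(1) by (auto simp: T'_def)
    thus ?thesis using continuous_on_compose2[OF contf contc'] by simp
  qed
  have cont1: "continuous_on T' K0" unfolding K0_def qq_def h_def
    by (intro continuous_intros cfc) (use hne2 in \<open>auto simp: T'_def\<close>)
  have real1: "K0 z \<in> \<real>" if "z \<in> S" "z \<in> \<real>" for z
  proof -
    have im: "Im z = 0" using that(2) by (simp add: complex_is_Real_iff)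
    have "norm (c z) = 1" using norm_cc(3)[of z] im nz0 by (simp add: c_def norm_mult)
    moreover have "dist (c z) \<zeta>0 < \<delta>" using cS[OF that(1)] by (simp add: \<epsilon>1_def)
    ultimately have "norm (f (c z)) = 1" using mod1 by simp
    hence "norm (h (c z)) = 1" using nxi by (simp add: h_def norm_mult)
    moreover have "h (c z) \<noteq> -1"
    proof -
      have i0: "0 \<le> Im z" using im by simp
      show ?thesis by (rule hne[OF cU(1)[OF that(1) i0] cU(2)[OF that(1) i0]])
    qed
    ultimately show ?thesis unfolding K0_def by (rule qq_real)
  qed
  have cnjS: "cnj ` S \<subseteq> S" by (auto simp: S_def)
  define K where "K = (\<lambda>z. if 0 \<le> Im z then K0 z else cnj (K0 (cnj z)))"
  have holK: "K holomorphic_on S" unfolding K_def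
    by (rule Schwarz_reflection) (use cnjS hol1 cont1 real1 in \<open>auto simp: S_def T_def T'_def\<close>)
  have lp: "0 islimpt {s\<in>S. K s = 0}"
  proof (rule islimptI)
    fix U :: "complex set" assume "0 \<in> U" "open U"
    then obtain e where epos': "e > 0" and eU: "ball 0 e \<subseteq> U" by (meson openE)
    define e' where "e' = min e r"
    have e'pos: "e' > 0" using epos' rpos by (simp add: e'_def)
    have nm1: "cnj \<zeta>0 * w \<noteq> -1" if "dist w \<zeta>0 < 1" for w
    proof
      assume "cnj \<zeta>0 * w = -1"
      hence "\<zeta>0 * (cnj \<zeta>0 * w) = - \<zeta>0" by simp
      hence "w = - \<zeta>0" using unit_cancel[OF cz0] by simp
      with that nz0 show False by (simp add: dist_norm)
    qed
    have contq: "continuous_on (ball \<zeta>0 1) (\<lambda>w. qq (cnj \<zeta>0 * w))" unfolding qq_def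
    proof (intro continuous_intros)
      show "\<forall>x\<in>ball \<zeta>0 1. 1 + cnj \<zeta>0 * x \<noteq> 0"
        using nm1 by (auto simp: dist_commute add_eq_0_iff)
    qed
    have q1: "qq (cnj \<zeta>0 * \<zeta>0) = 0" using cz0 by (simp add: qq_def)
    obtain \<eta> where etapos: "\<eta> > 0" and eta: "\<And>w. w\<in>ball \<zeta>0 1 \<Longrightarrow> dist w \<zeta>0 < \<eta> \<Longrightarrow> dist (qq (cnj \<zeta>0 * w)) 0 < e'"
      using contq[unfolded continuous_on_iff, rule_format, of \<zeta>0 e'] e'pos q1 by auto
    obtain \<zeta> where zS: "\<zeta> \<in> {z\<in>ucircle. f z = \<xi>}" and zb: "\<zeta> \<in> ball \<zeta>0 (min \<eta> (min \<epsilon>1 1))" and zne: "\<zeta> \<noteq> \<zeta>0"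
      using islimptE[OF lim, of "ball \<zeta>0 (min \<eta> (min \<epsilon>1 1))"] etapos e1pos by auto
    define u where "u = cnj \<zeta>0 * \<zeta>"
    have d1: "dist \<zeta> \<zeta>0 < 1" "dist \<zeta> \<zeta>0 < \<eta>" using zb by (auto simp: dist_commute)
    have um: "u \<noteq> -1" using nm1[OF d1(1)] by (simp add: u_def)
    have un: "norm u = 1" using zS nz0 by (simp add: u_def norm_mult)
    define s where "s = qq u"
    have sR: "s \<in> \<real>" unfolding s_def using un um by (rule qq_real)
    have sim: "Im s = 0" using sR by (simp add: complex_is_Real_iff)
    have se: "norm s < e'" using eta[of \<zeta>] d1 by (simp add: s_def u_def dist_commute)
    have sS: "s \<in> S" "s \<in> U" using se eU by (auto simp: S_def e'_def)
    have "u \<noteq> 1"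
    proof
      assume "u = 1"
      hence "\<zeta>0 * (cnj \<zeta>0 * \<zeta>) = \<zeta>0" by (simp add: u_def)
      hence "\<zeta> = \<zeta>0" using unit_cancel[OF cz0] by simp
      with zne show False by simp
    qed
    hence sne: "s \<noteq> 0" using qq_eq0[OF um] by (simp add: s_def)
    have "c s = \<zeta>0 * u" unfolding c_def s_def using cc_qq[OF um] by simp
    also have "\<dots> = \<zeta>" using unit_cancel[OF cz0] by (simp add: u_def)
    finally have cs: "c s = \<zeta>" .
    have "K s = qq (h \<zeta>)" using sim cs by (simp add: K_def K0_def)
    also have "\<dots> = 0" using zS cxi by (simp add: h_def qq_def)
    finally have "K s = 0" .
    thus "\<exists>y\<in>{s\<in>S. K s = 0}. y \<in> U \<and> y \<noteq> 0" using sS sne by blast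
  qed
  have K0all: "K s = 0" if "s \<in> S" for s
    by (rule analytic_continuation[OF holK _ _ _ _ lp, of s])
       (use that rpos in \<open>auto simp: S_def intro: convex_connected\<close>)
  define s1 where "s1 = \<i> * of_real (r/2)"
  have s1im: "Im s1 = r/2" by (simp add: s1_def)
  have s1T: "s1 \<in> T" using rpos by (simp add: T_def S_def s1_def norm_mult)
  define p where "p = c s1"
  have pU: "p \<in> udisc" using cUo[of s1] s1im rpos by (simp add: p_def)
  define \<psi> where "\<psi> w = qq (cnj \<zeta>0 * w)" for w
  have nm2: "cnj \<zeta>0 * w \<noteq> -1" if "w \<in> udisc" for w
  proof
    assume "cnj \<zeta>0 * w = -1"
    hence "norm (cnj \<zeta>0 * w) = 1" by simp
    with that nz0 show False by (simp add: norm_mult)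
  qed
  have contpsi: "continuous_on udisc \<psi>" unfolding \<psi>_def qq_def
  proof (intro continuous_intros)
    show "\<forall>x\<in>udisc. 1 + cnj \<zeta>0 * x \<noteq> 0"
      using nm2 by (auto simp: add_eq_0_iff)
  qed
  have psip: "\<psi> p = s1"
  proof -
    have "cnj \<zeta>0 * p = cc s1" using unit_cancel2[OF cz0] by (simp add: p_def c_def)
    thus ?thesis using qq_cc[OF im_nonneg_ne[of s1]] s1im rpos by (simp add: \<psi>_def)
  qed
  have openT: "open T" unfolding T_def S_def by (intro open_Int open_ball open_halfspace_Im_gt)
  have "open (\<psi> -` T \<inter> udisc)" using contpsi openT by (simp add: continuous_on_open_vimage)
  moreover have "p \<in> \<psi> -` T \<inter> udisc" using psip s1T pU by simp
  ultimately obtain \<rho> where rhopos: "\<rho> > 0" and rho: "ball p \<rho> \<subseteq> \<psi> -` T \<inter> udisc" by (meson openE)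
  have fw: "f w - \<xi> = 0" if "w \<in> ball p \<rho>" for w
  proof -
    have wU: "w \<in> udisc" and wT: "\<psi> w \<in> T" using rho that by auto
    have "c (\<psi> w) = \<zeta>0 * (cnj \<zeta>0 * w)" unfolding c_def \<psi>_def using cc_qq[OF nm2[OF wU]] by simp
    also have "\<dots> = w" using unit_cancel[OF cz0] by simp
    finally have cw: "c (\<psi> w) = w" .
    have imp: "0 < Im (\<psi> w)" "\<psi> w \<in> S" using wT by (auto simp: T_def)
    have "K0 (\<psi> w) = 0" using K0all[OF imp(2)] imp(1) by (simp add: K_def)
    hence "qq (h w) = 0" using cw by (simp add: K0_def)
    moreover have "h w \<noteq> -1"
    proof -
      have i0: "0 \<le> Im (\<psi> w)" using imp(1) by simp
      show ?thesis using hne[OF cU(1)[OF imp(2) i0] cU(2)[OF imp(2) i0]] cw by simp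
    qed
    ultimately have "h w = 1" using qq_eq0 by blast
    hence "\<xi> * (cnj \<xi> * f w) = \<xi>" by (simp add: h_def)
    hence "f w = \<xi>" using unit_cancel[OF cxi] by simp
    thus ?thesis by simp
  qed
  have holf': "(\<lambda>w. f w - \<xi>) holomorphic_on udisc" by (intro holomorphic_intros holf)
  have fU: "f w = \<xi>" if "w \<in> udisc" for w
  proof -
    have sub: "ball p \<rho> \<subseteq> udisc" using rho by blast
    have lpp: "p islimpt ball p \<rho>" using rhopos by (simp add: islimpt_ball)
    have conn: "connected udisc" by (simp add: convex_connected)
    have "f w - \<xi> = 0"
      by (rule analytic_continuation[OF holf' open_ball conn sub pU lpp fw that])
    thus ?thesis by simp
  qed
  show ?thesis
  proof
    fix z assume "z \<in> cudisc"
    thus "f z = \<xi>"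
      using continuous_constant_on_closure[of udisc f \<xi> z] contf fU by (simp add: closure_ball)
  qed
qed

lemma seqlemma:
  fixes f g :: "complex \<Rightarrow> complex"
  assumes contf: "continuous_on cudisc f" and contg: "continuous_on cudisc g"
    and holf: "f holomorphic_on udisc"
    and bd: "\<And>z. z \<in> ucircle \<Longrightarrow> norm (f z) = 1 \<or> norm (g z) = 1"
    and fnc: "\<not> (\<exists>c. \<forall>z\<in>cudisc. f z = c)"
    and zc: "\<forall>n. \<zeta> n \<in> ucircle" and fz: "\<forall>n. f (\<zeta> n) = \<xi>"
    and lim: "(\<lambda>n. g (\<zeta> n)) \<longlonglongrightarrow> w" and wU: "w \<in> udisc"
    and fin: "\<And>l. f l = \<xi> \<Longrightarrow> g l = w \<Longrightarrow> finite {n. \<zeta> n = l}"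
  shows False
proof -
  have "seq_compact ucircle" by (intro compact_imp_seq_compact compact_sphere)
  then obtain \<zeta>0 r where z0: "\<zeta>0 \<in> ucircle" and r: "strict_mono r" and lr: "(\<zeta> \<circ> r) \<longlonglongrightarrow> \<zeta>0"
    using seq_compactE zc by metis
  define x where "x = \<zeta> \<circ> r"
  have xc: "\<forall>n. x n \<in> cudisc" using zc by (simp add: x_def)
  have z0c: "\<zeta>0 \<in> cudisc" using z0 by simp
  have "(g \<circ> x) \<longlonglongrightarrow> g \<zeta>0"
    using contg[unfolded continuous_on_sequentially] xc z0c lr by (simp add: x_def)
  moreover have "(g \<circ> x) \<longlonglongrightarrow> w"
    using LIMSEQ_subseq_LIMSEQ[OF lim r] by (simp add: x_def o_def)
  ultimately have gz0: "g \<zeta>0 = w" using LIMSEQ_unique by blast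
  have "(f \<circ> x) \<longlonglongrightarrow> f \<zeta>0"
    using contf[unfolded continuous_on_sequentially] xc z0c lr by (simp add: x_def)
  moreover have "(f \<circ> x) = (\<lambda>n. \<xi>)" using fz by (auto simp: x_def)
  ultimately have fz0: "f \<zeta>0 = \<xi>" using LIMSEQ_unique tendsto_const by metis
  have "finite (r -` {n. \<zeta> n = \<zeta>0})"
    using fin[OF fz0 gz0] strict_mono_imp_inj_on[OF r] by (intro finite_vimageI) auto
  hence "finite {n. x n = \<zeta>0}" by (simp add: x_def vimage_def)
  then obtain N where N: "\<And>n. x n = \<zeta>0 \<Longrightarrow> n < N" unfolding finite_nat_set_iff_bounded by blast
  have lp: "\<zeta>0 islimpt {z\<in>ucircle. f z = \<xi>}"
    unfolding islimpt_sequential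
  proof (intro exI conjI allI)
    show "(\<lambda>n. x (n + N)) \<longlonglongrightarrow> \<zeta>0" using LIMSEQ_ignore_initial_segment[OF lr] by (simp add: x_def)
    fix n
    have "x (n + N) \<noteq> \<zeta>0" using N[of "n+N"] by auto
    thus "x (n + N) \<in> {z\<in>ucircle. f z = \<xi>} - {\<zeta>0}" using zc fz by (simp add: x_def)
  qed
  have "1 - norm w > 0" using wU by simp
  then obtain \<delta> where dpos: "\<delta> > 0" and d: "\<And>z. z \<in> cudisc \<Longrightarrow> dist z \<zeta>0 < \<delta> \<Longrightarrow> dist (g z) (g \<zeta>0) < 1 - norm w"
    using contg[unfolded continuous_on_iff, rule_format, OF z0c, of "1 - norm w"] by auto
  have mod1: "norm (f z) = 1" if "z \<in> ucircle" "dist z \<zeta>0 < \<delta>" for z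
  proof -
    have "dist (g z) w < 1 - norm w" using d[of z] that gz0 by simp
    hence "norm (g z) < 1" using norm_triangle_ineq2[of "g z" w] by (simp add: dist_norm)
    thus ?thesis using bd[OF that(1)] by auto
  qed
  have "\<forall>z\<in>cudisc. f z = \<xi>" by (rule core[OF contf holf z0 dpos mod1 fz0 lp])
  with fnc show False by blast
qed

lemma finite_inj_fibre: "inj h \<Longrightarrow> finite {n. h n = l}"
proof -
  assume "inj h"
  hence "finite (h -` {l})" by (intro finite_vimageI) auto
  thus ?thesis by (simp add: vimage_def)
qed

theorem mainTheorem2:
  fixes f g :: "complex \<Rightarrow> complex"
  assumes cont: "continuous_on cudisc (\<lambda>z. (f z, g z))"
    and maps: "(\<lambda>z. (f z, g z)) ` cudisc \<subseteq> cudisc \<times> cudisc"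
    and holf: "f holomorphic_on udisc"
    and holg: "g holomorphic_on udisc"
    and bdry: "(\<lambda>z. (f z, g z)) ` ucircle \<subseteq> frontier bidisc"
    and fnc: "\<not> (\<exists>c. \<forall>z\<in>cudisc. f z = c)"
    and gnc: "\<not> (\<exists>c. \<forall>z\<in>cudisc. g z = c)"
  shows "(\<forall>\<xi>\<in>ucircle. \<not> (\<exists>\<zeta> :: nat \<Rightarrow> complex. inj \<zeta> \<and> (\<forall>n. \<zeta> n \<in> ucircle)
              \<and> (\<forall>n. f (\<zeta> n) = \<xi>) \<and> (\<exists>w\<in>udisc. seq_cluster_point (\<lambda>n. g (\<zeta> n)) w)))
    \<and> (\<forall>\<xi>\<in>ucircle. \<not> (\<exists>\<zeta> :: nat \<Rightarrow> complex. inj \<zeta> \<and> (\<forall>n. \<zeta> n \<in> ucircle)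
              \<and> (\<forall>n. g (\<zeta> n) = \<xi>) \<and> (\<exists>w\<in>udisc. seq_cluster_point (\<lambda>n. f (\<zeta> n)) w)))
    \<and> (\<forall>P. open_face P \<longrightarrow>
          \<not> (\<exists>p\<in>P. p islimpt ((\<lambda>z. (f z, g z)) ` ucircle \<inter> P)))"
proof -
  have contf: "continuous_on cudisc f" using continuous_on_fst[OF cont] by simp
  have contg: "continuous_on cudisc g" using continuous_on_snd[OF cont] by simp
  have fr: "frontier bidisc = cudisc \<times> cudisc - bidisc"
    by (simp add: frontier_def closure_Times interior_Times)
  have bd: "norm (f z) = 1 \<or> norm (g z) = 1" if "z \<in> ucircle" for z
  proof -
    have "(f z, g z) \<in> cudisc \<times> cudisc - bidisc" using bdry that fr by blast
    thus ?thesis by auto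
  qed
  have bd': "norm (g z) = 1 \<or> norm (f z) = 1" if "z \<in> ucircle" for z using bd[OF that] by blast
  have P1: "\<not> (\<exists>\<zeta> :: nat \<Rightarrow> complex. inj \<zeta> \<and> (\<forall>n. \<zeta> n \<in> ucircle)
              \<and> (\<forall>n. f (\<zeta> n) = \<xi>) \<and> (\<exists>w\<in>udisc. seq_cluster_point (\<lambda>n. g (\<zeta> n)) w))"
    if contf: "continuous_on cudisc f" and contg: "continuous_on cudisc g"
    and holf: "f holomorphic_on udisc"
    and bd: "\<And>z. z \<in> ucircle \<Longrightarrow> norm (f z) = 1 \<or> norm (g z) = 1"
    and fnc: "\<not> (\<exists>c. \<forall>z\<in>cudisc. f z = c)" for f g :: "complex \<Rightarrow> complex" and \<xi>
  proof
    assume "\<exists>\<zeta> :: nat \<Rightarrow> complex. inj \<zeta> \<and> (\<forall>n. \<zeta> n \<in> ucircle)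
              \<and> (\<forall>n. f (\<zeta> n) = \<xi>) \<and> (\<exists>w\<in>udisc. seq_cluster_point (\<lambda>n. g (\<zeta> n)) w)"
    then obtain \<zeta> :: "nat \<Rightarrow> complex" and w r where inj: "inj \<zeta>" and zc: "\<forall>n. \<zeta> n \<in> ucircle"
      and fz: "\<forall>n. f (\<zeta> n) = \<xi>" and wU: "w \<in> udisc" and r: "strict_mono r"
      and lim: "((\<lambda>n. g (\<zeta> n)) \<circ> r) \<longlonglongrightarrow> w"
      unfolding seq_cluster_point_def by blast
    have inj2: "inj (\<zeta> \<circ> r)" using inj strict_mono_imp_inj_on[OF r] by (simp add: inj_compose)
    show False
      by (rule seqlemma[OF contf contg holf bd fnc, of "\<zeta> \<circ> r" \<xi> w])
         (use zc fz lim wU finite_inj_fibre[OF inj2] in \<open>auto simp: o_def\<close>)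
  qed
  have P3: "False"
    if contf: "continuous_on cudisc f" and contg: "continuous_on cudisc g"
    and holf: "f holomorphic_on udisc"
    and bd: "\<And>z. z \<in> ucircle \<Longrightarrow> norm (f z) = 1 \<or> norm (g z) = 1"
    and fnc: "\<not> (\<exists>c. \<forall>z\<in>cudisc. f z = c)"
    and y: "\<forall>n. y n \<in> (\<lambda>z. (f z, g z)) ` ucircle \<inter> ({\<xi>} \<times> udisc) - {(\<xi>, w)}"
    and ylim: "y \<longlonglongrightarrow> (\<xi>, w)" and wU: "w \<in> udisc"
    for f g :: "complex \<Rightarrow> complex" and \<xi> w and y :: "nat \<Rightarrow> complex \<times> complex"
  proof -
    have "\<forall>n. \<exists>z. z \<in> ucircle \<and> y n = (f z, g z)" using y by blast
    then obtain \<zeta> where \<zeta>: "\<And>n. \<zeta> n \<in> ucircle \<and> y n = (f (\<zeta> n), g (\<zeta> n))" by metis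
    have fz: "\<forall>n. f (\<zeta> n) = \<xi>" using y \<zeta> by (metis (no_types, lifting) DiffD1 IntD2 SigmaE fst_conv singletonD)
    have "(\<lambda>n. snd (y n)) \<longlonglongrightarrow> w" using tendsto_snd[OF ylim] by simp
    hence lim: "(\<lambda>n. g (\<zeta> n)) \<longlonglongrightarrow> w" using \<zeta> by simp
    have fin: "finite {n. \<zeta> n = l}" if "f l = \<xi>" "g l = w" for l
    proof -
      have "{n. \<zeta> n = l} = {}" using y \<zeta> that by force
      thus ?thesis by simp
    qed
    show False
      by (rule seqlemma[OF contf contg holf bd fnc, of \<zeta> \<xi> w])
         (use \<zeta> fz lim wU fin in auto)
  qed
  show ?thesis
  proof (intro conjI ballI allI impI)
    fix \<xi> :: complex
    show "\<not> (\<exists>\<zeta> :: nat \<Rightarrow> complex. inj \<zeta> \<and> (\<forall>n. \<zeta> n \<in> ucircle)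
              \<and> (\<forall>n. f (\<zeta> n) = \<xi>) \<and> (\<exists>w\<in>udisc. seq_cluster_point (\<lambda>n. g (\<zeta> n)) w))"
      by (rule P1[OF contf contg holf bd fnc])
  next
    fix \<xi> :: complex
    show "\<not> (\<exists>\<zeta> :: nat \<Rightarrow> complex. inj \<zeta> \<and> (\<forall>n. \<zeta> n \<in> ucircle)
              \<and> (\<forall>n. g (\<zeta> n) = \<xi>) \<and> (\<exists>w\<in>udisc. seq_cluster_point (\<lambda>n. f (\<zeta> n)) w))"
      by (rule P1[OF contg contf holg bd' gnc])
  next
    fix P :: "(complex \<times> complex) set"
    assume "open_face P"
    then obtain z where zc: "z \<in> ucircle" and PP: "P = {z} \<times> udisc \<or> P = udisc \<times> {z}"
      unfolding open_face_def by blast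
    show "\<not> (\<exists>p\<in>P. p islimpt ((\<lambda>z. (f z, g z)) ` ucircle \<inter> P))"
    proof
      assume "\<exists>p\<in>P. p islimpt ((\<lambda>z. (f z, g z)) ` ucircle \<inter> P)"
      then obtain p where pP: "p \<in> P" and plim: "p islimpt ((\<lambda>z. (f z, g z)) ` ucircle \<inter> P)" by blast
      then obtain y where y: "\<forall>n. y n \<in> (\<lambda>z. (f z, g z)) ` ucircle \<inter> P - {p}" and ylim: "y \<longlonglongrightarrow> p"
        unfolding islimpt_sequential by blast
      from PP show False
      proof
        assume P1: "P = {z} \<times> udisc"
        then obtain w where pw: "p = (z, w)" and wU: "w \<in> udisc" using pP by auto
        show False by (rule P3[OF contf contg holf bd fnc, of y z w]) (use y ylim pw wU P1 in auto)
      next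
        assume P2: "P = udisc \<times> {z}"
        then obtain w where pw: "p = (w, z)" and wU: "w \<in> udisc" using pP by auto
        define y' where "y' n = prod.swap (y n)" for n
        have y': "\<forall>n. y' n \<in> (\<lambda>z. (g z, f z)) ` ucircle \<inter> ({z} \<times> udisc) - {(z, w)}"
        proof
          fix n
          obtain u where u: "u \<in> ucircle" "y n = (f u, g u)" using y by blast
          have "y n \<in> udisc \<times> {z}" "y n \<noteq> (w, z)" using y P2 pw by auto
          thus "y' n \<in> (\<lambda>z. (g z, f z)) ` ucircle \<inter> ({z} \<times> udisc) - {(z, w)}"
            using u by (auto simp: y'_def)
        qed
        have "(\<lambda>n. (snd (y n), fst (y n))) \<longlonglongrightarrow> (z, w)"
          using tendsto_Pair[OF tendsto_snd[OF ylim] tendsto_fst[OF ylim]] pw by simp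
        moreover have "y' = (\<lambda>n. (snd (y n), fst (y n)))" by (auto simp: y'_def fun_eq_iff prod.swap_def prod_eq_iff)
        ultimately have ylim': "y' \<longlonglongrightarrow> (z, w)" by simp
        show False by (rule P3[OF contg contf holg bd' gnc y' ylim' wU])
      qed
    qed
  qed
qed
end
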